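(* Let $P\in\mathbb{R}_+^{n\times n}$ be sub-stochastic, $w\in\mathbb{R}^n_+$, $c\in\mathbb{R}^n$, and let $\mathcal X=\{x\in\mathbb{R}^n:\,x=S_0^w(P'x+c)\}$. Then there exists a partition $\mathcal V=\{1,\dots,n\}=\mathcal V_+\cup\mathcal V_0\cup\mathcal V_-$ such that (i) every equilibrium $x\in\mathcal X$ satisfies $x_{\mathcal V_-}=0$, $x_{\mathcal V_+}=w_{\mathcal V_+}$, and $x_i=c_i+\sum_{j}P_{ji}x_j$ for every $i\in\mathcal V_0$; (ii) for any two equilibria $x^{(1)},x^{(2)}\in\mathcal X$, $x^{(1)}_{\mathcal V_-}=x^{(2)}_{\mathcal V_-}$ and $x^{(1)}_{\mathcal V_+}=x^{(2)}_{\mathcal V_+}$.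
   Context: $P$ sub-stochastic: nonnegative with $P\mathbbm{1}\le\mathbbm{1}$. $(S_0^w(x))_i=\min\{\max\{x_i,0\},w_i\}$; $P'$ is the transpose. For a vector $v$ and $\mathcal A\subseteq\{1,\dots,n\}$, $v_{\mathcal A}$ is the subvector indexed by $\mathcal A$. *)

theory Defs
  imports "HOL-Analysis.Analysis"
begin

definition substochastic :: "real^'n^'n \<Rightarrow> bool" where
  "substochastic P \<longleftrightarrow> (\<forall>i j. 0 \<le> P $ i $ j) \<and> (\<forall>i. (\<Sum>j\<in>UNIV. P $ i $ j) \<le> 1)"

definition sat0 :: "real^'n \<Rightarrow> real^'n \<Rightarrow> real^'n" where
  "sat0 w x = (\<chi> i. min (max (x $ i) 0) (w $ i))"

definition equilibria :: "real^'n^'n \<Rightarrow> real^'n \<Rightarrow> real^'n \<Rightarrow> (real^'n) set" where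
  "equilibria P w c = {x. x = sat0 w (transpose P *v x + c)}"

end

theory Submission
  imports Defs
begin

lemma sat_rigid:
  fixes a b u v wi :: real
  assumes "0 \<le> wi" "u = min (max a 0) wi" "v = min (max b 0) wi"
    "\<bar>u - v\<bar> = \<bar>a - b\<bar>" "u \<noteq> a"
  shows "v = u"
  using assms by (auto simp: min_def max_def abs_if split: if_splits)

lemma sat_lip:
  fixes a b wi :: real
  shows "\<bar>min (max a 0) wi - min (max b 0) wi\<bar> \<le> \<bar>a - b\<bar>"
  by (auto simp: min_def max_def abs_if)

definition lin :: "real^'n^'n \<Rightarrow> real^'n \<Rightarrow> real^'n \<Rightarrow> 'n \<Rightarrow> real" where
  "lin P c x i = c $ i + (\<Sum>j\<in>UNIV. P $ j $ i * x $ j)"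

lemma eq_lin:
  assumes "x \<in> equilibria P w c"
  shows "x $ i = min (max (lin P c x i) 0) (w $ i)"
proof -
  have "x $ i = sat0 w (transpose P *v x + c) $ i" using assms unfolding equilibria_def by simp
  thus ?thesis
    by (simp add: sat0_def lin_def matrix_vector_mult_def transpose_def add.commute)
qed

lemma key:
  fixes P :: "real^'n^'n"
  assumes sub: "substochastic P"
    and x: "x \<in> equilibria P w c" and y: "y \<in> equilibria P w c"
  shows "\<bar>x $ i - y $ i\<bar> = \<bar>lin P c x i - lin P c y i\<bar>"
proof -
  define d where "d j = \<bar>x $ j - y $ j\<bar>" for j
  have P0: "0 \<le> P $ i $ j" for i j using sub by (simp add: substochastic_def)
  have P1: "(\<Sum>i\<in>UNIV. P $ j $ i) \<le> 1" for j using sub by (simp add: substochastic_def)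
  have le1: "d i \<le> \<bar>lin P c x i - lin P c y i\<bar>" for i
    unfolding d_def using eq_lin[OF x, of i] eq_lin[OF y, of i] sat_lip
    by metis
  have le2: "\<bar>lin P c x i - lin P c y i\<bar> \<le> (\<Sum>j\<in>UNIV. P $ j $ i * d j)" for i
  proof -
    have "lin P c x i - lin P c y i = (\<Sum>j\<in>UNIV. P $ j $ i * (x $ j - y $ j))"
      by (simp add: lin_def sum_subtractf right_diff_distrib)
    also have "\<bar>\<dots>\<bar> \<le> (\<Sum>j\<in>UNIV. \<bar>P $ j $ i * (x $ j - y $ j)\<bar>)" by (rule sum_abs)
    also have "\<dots> = (\<Sum>j\<in>UNIV. P $ j $ i * d j)"
      by (simp add: d_def abs_mult P0)
    finally show ?thesis .
  qed
  have "(\<Sum>i\<in>UNIV. \<bar>lin P c x i - lin P c y i\<bar>) \<le> (\<Sum>i\<in>UNIV. \<Sum>j\<in>UNIV. P $ j $ i * d j)"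
    by (rule sum_mono) (rule le2)
  also have "\<dots> = (\<Sum>j\<in>UNIV. d j * (\<Sum>i\<in>UNIV. P $ j $ i))"
    by (subst sum.swap) (simp add: sum_distrib_left mult.commute)
  also have "\<dots> \<le> (\<Sum>j\<in>UNIV. d j)"
    by (rule sum_mono) (metis P1 d_def abs_ge_zero mult_left_le)
  finally have S: "(\<Sum>i\<in>UNIV. \<bar>lin P c x i - lin P c y i\<bar> - d i) \<le> 0"
    by (simp add: sum_subtractf)
  have nn: "\<And>i. i \<in> UNIV \<Longrightarrow> 0 \<le> \<bar>lin P c x i - lin P c y i\<bar> - d i" using le1 by simp
  have "0 \<le> (\<Sum>i\<in>UNIV. \<bar>lin P c x i - lin P c y i\<bar> - d i)"
    by (rule sum_nonneg) (rule nn)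
  hence "(\<Sum>i\<in>UNIV. \<bar>lin P c x i - lin P c y i\<bar> - d i) = 0"
    using S by linarith
  hence "\<forall>i\<in>UNIV. \<bar>lin P c x i - lin P c y i\<bar> - d i = 0"
    using sum_nonneg_eq_0_iff[of UNIV "\<lambda>i. \<bar>lin P c x i - lin P c y i\<bar> - d i"] nn by simp
  thus ?thesis by (simp add: d_def)
qed

lemma rigid:
  fixes P :: "real^'n^'n"
  assumes sub: "substochastic P" and w: "\<forall>i. 0 \<le> w $ i"
    and x: "x \<in> equilibria P w c" and y: "y \<in> equilibria P w c"
    and ne: "x $ i \<noteq> lin P c x i"
  shows "y $ i = x $ i"
  by (rule sat_rigid[OF _ eq_lin[OF x] eq_lin[OF y] key[OF sub x y] ne]) (use w in auto)

theorem corollary1: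
  fixes P :: "real^'n^'n" and w c :: "real^'n"
  assumes "substochastic P"
    and "\<forall>i. 0 \<le> w $ i"
  shows "\<exists>Vp V0 Vm :: 'n set.
           Vp \<union> V0 \<union> Vm = UNIV \<and> Vp \<inter> V0 = {} \<and> Vp \<inter> Vm = {} \<and> V0 \<inter> Vm = {} \<and>
           (\<forall>x \<in> equilibria P w c.
               (\<forall>i\<in>Vm. x $ i = 0) \<and> (\<forall>i\<in>Vp. x $ i = w $ i) \<and>
               (\<forall>i\<in>V0. x $ i = c $ i + (\<Sum>j\<in>UNIV. P $ j $ i * x $ j))) \<and>
           (\<forall>x1 \<in> equilibria P w c. \<forall>x2 \<in> equilibria P w c.
               (\<forall>i\<in>Vm. x1 $ i = x2 $ i) \<and> (\<forall>i\<in>Vp. x1 $ i = x2 $ i))"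
proof -
  let ?X = "equilibria P w c"
  define V0 where "V0 = {i. \<forall>x\<in>?X. x $ i = lin P c x i}"
  define Vm where "Vm = {i. i \<notin> V0 \<and> (\<exists>x\<in>?X. x $ i \<noteq> lin P c x i \<and> x $ i = 0)}"
  define Vp where "Vp = UNIV - V0 - Vm"
  have m: "x $ i = 0" if xX: "x \<in> ?X" and iV: "i \<in> Vm" for x i
  proof -
    obtain z where "z \<in> ?X" "z $ i \<noteq> lin P c z i" "z $ i = 0" using iV by (auto simp: Vm_def)
    thus ?thesis using rigid[OF assms \<open>z \<in> ?X\<close> xX] by simp
  qed
  have p: "x $ i = w $ i" if xX: "x \<in> ?X" and iV: "i \<in> Vp" for x i
  proof -
    obtain z where z: "z \<in> ?X" "z $ i \<noteq> lin P c z i" using iV by (auto simp: Vp_def V0_def)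
    hence "z $ i \<noteq> 0" using iV by (auto simp: Vp_def Vm_def)
    hence "z $ i = w $ i" using eq_lin[OF z(1), of i] z(2) by (auto simp: min_def max_def split: if_splits)
    thus ?thesis using rigid[OF assms z(1) xX z(2)] by simp
  qed
  have o: "x $ i = c $ i + (\<Sum>j\<in>UNIV. P $ j $ i * x $ j)" if "x \<in> ?X" "i \<in> V0" for x i
    using that by (simp add: V0_def lin_def)
  have d1: "Vp \<union> V0 \<union> Vm = UNIV" "Vp \<inter> V0 = {}" "Vp \<inter> Vm = {}" "V0 \<inter> Vm = {}"
    unfolding Vp_def Vm_def by blast+
  show ?thesis
    apply (rule exI[of _ Vp], rule exI[of _ V0], rule exI[of _ Vm])
    apply (intro conjI d1 ballI)
    using m p o by metis+
qed

end
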